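(* Let $A$ be a commutative noetherian ring with $1/2\in A$ and $P$ a projective $A$-module of rank $\ge 2$. The natural map $\mu:\pi_0(\mathbb Q'(P))\to\pi_0(\mathbb Q'(P[T]))$, $[v]\mapsto[v]$, is well defined and bijective.
   Context: For a projective module $P$ over a ring $B$, $\mathbb Q'(P)=\{(p,f,z)\in P\oplus P^*\oplus B: z^2+f(p)=1\}$. $\pi_0(\mathbb Q'(P))$ is the quotient of $\mathbb Q'(P)$ by the equivalence relation generated by: $v_0\sim v_1$ if there is $\Phi(W)\in\mathbb Q'(P[W])$ ($W$ a new variable) with $\Phi(0)=v_0$, $\Phi(1)=v_1$. Elements of $\mathbb Q'(P)$ are regarded in $\mathbb Q'(P[T])$ via base change. *)

theory Defs
  imports "HOL-Computational_Algebra.Polynomial"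
begin

definition is_ideal :: "'a::comm_ring_1 set \<Rightarrow> bool" where
  "is_ideal I \<longleftrightarrow> 0 \<in> I \<and> (\<forall>x\<in>I. \<forall>y\<in>I. x + y \<in> I) \<and> (\<forall>a. \<forall>x\<in>I. a * x \<in> I)"

definition is_prime_ideal :: "'a::comm_ring_1 set \<Rightarrow> bool" where
  "is_prime_ideal I \<longleftrightarrow> is_ideal I \<and> 1 \<notin> I \<and> (\<forall>a b. a * b \<in> I \<longrightarrow> a \<in> I \<or> b \<in> I)"

definition noetherian_ring :: "'a::comm_ring_1 itself \<Rightarrow> bool" where
  "noetherian_ring _ \<longleftrightarrow> (\<forall>I::'a set. is_ideal I \<longrightarrow>
     (\<exists>gs::'a list. I = {\<Sum>i<length gs. c i * gs ! i | c. True}))"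

text \<open>A f.g. projective A-module P is the image of an idempotent n x n matrix e over A,
  i.e. P = {x \<in> A^n. e x = x}. Vectors are functions nat \<Rightarrow> 'b vanishing outside {..<n}.
  For a ring map phi : A \<rightarrow> B, the base change P \<otimes> B is the image of phi(e) in B^n, and its
  dual (P \<otimes> B)^* = Hom_B(P \<otimes> B, B) is identified with row vectors f with f phi(e) = f,
  the pairing being f(p) = \<Sum> f_i p_i.\<close>

definition idempotent_mat :: "nat \<Rightarrow> (nat \<Rightarrow> nat \<Rightarrow> 'a::comm_ring_1) \<Rightarrow> bool" where
  "idempotent_mat n e \<longleftrightarrow> (\<forall>i<n. \<forall>j<n. (\<Sum>k<n. e i k * e k j) = e i j)"

text \<open>Rank of P at a prime p = dim of P \<otimes> k(p) = rank of e over k(p);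
  rank \<ge> 2 iff some 2x2 minor of e is nonzero in k(p), i.e. not in p.\<close>
definition rank_ge2_at :: "nat \<Rightarrow> (nat \<Rightarrow> nat \<Rightarrow> 'a::comm_ring_1) \<Rightarrow> 'a set \<Rightarrow> bool" where
  "rank_ge2_at n e p \<longleftrightarrow> (\<exists>i j k l. i < j \<and> j < n \<and> k < l \<and> l < n \<and>
      e i k * e j l - e i l * e j k \<notin> p)"

definition proj_rank_ge2 :: "nat \<Rightarrow> (nat \<Rightarrow> nat \<Rightarrow> 'a::comm_ring_1) \<Rightarrow> bool" where
  "proj_rank_ge2 n e \<longleftrightarrow> (\<forall>p. is_prime_ideal p \<longrightarrow> rank_ge2_at n e p)"

type_synonym 'b qelem = "(nat \<Rightarrow> 'b) \<times> (nat \<Rightarrow> 'b) \<times> 'b"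

definition Qp :: "('a::comm_ring_1 \<Rightarrow> 'b::comm_ring_1) \<Rightarrow> nat \<Rightarrow> (nat \<Rightarrow> nat \<Rightarrow> 'a) \<Rightarrow> 'b qelem set" where
  "Qp \<phi> n e = {(p, f, z). (\<forall>i. n \<le> i \<longrightarrow> p i = 0 \<and> f i = 0)
      \<and> (\<forall>i<n. p i = (\<Sum>j<n. \<phi> (e i j) * p j))
      \<and> (\<forall>j<n. f j = (\<Sum>i<n. f i * \<phi> (e i j)))
      \<and> z ^ 2 + (\<Sum>i<n. f i * p i) = 1}"

definition qconst :: "'b::comm_ring_1 qelem \<Rightarrow> 'b poly qelem" where
  "qconst v = (case v of (p, f, z) \<Rightarrow> ((\<lambda>i. [:p i:]), (\<lambda>i. [:f i:]), [:z:]))"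

definition qeval :: "'b::comm_ring_1 \<Rightarrow> 'b poly qelem \<Rightarrow> 'b qelem" where
  "qeval c v = (case v of (p, f, z) \<Rightarrow> ((\<lambda>i. poly (p i) c), (\<lambda>i. poly (f i) c), poly z c))"

definition htp :: "('a::comm_ring_1 \<Rightarrow> 'b::comm_ring_1) \<Rightarrow> nat \<Rightarrow> (nat \<Rightarrow> nat \<Rightarrow> 'a) \<Rightarrow> ('b qelem \<times> 'b qelem) set" where
  "htp \<phi> n e = {(v0, v1). \<exists>\<Phi> \<in> Qp (\<lambda>a. [:\<phi> a:]) n e. qeval 0 \<Phi> = v0 \<and> qeval 1 \<Phi> = v1}"

definition pi0_rel :: "('a::comm_ring_1 \<Rightarrow> 'b::comm_ring_1) \<Rightarrow> nat \<Rightarrow> (nat \<Rightarrow> nat \<Rightarrow> 'a) \<Rightarrow> ('b qelem \<times> 'b qelem) set" where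
  "pi0_rel \<phi> n e = ((htp \<phi> n e \<union> (htp \<phi> n e)\<inverse>)\<^sup>*) \<inter> (Qp \<phi> n e \<times> Qp \<phi> n e)"

definition pi0 :: "('a::comm_ring_1 \<Rightarrow> 'b::comm_ring_1) \<Rightarrow> nat \<Rightarrow> (nat \<Rightarrow> nat \<Rightarrow> 'a) \<Rightarrow> 'b qelem set set" where
  "pi0 \<phi> n e = Qp \<phi> n e // pi0_rel \<phi> n e"

abbreviation pi0_P :: "nat \<Rightarrow> (nat \<Rightarrow> nat \<Rightarrow> 'a::comm_ring_1) \<Rightarrow> 'a qelem set set" where
  "pi0_P n e \<equiv> pi0 (\<lambda>a. a) n e"

abbreviation pi0_PT :: "nat \<Rightarrow> (nat \<Rightarrow> nat \<Rightarrow> 'a::comm_ring_1) \<Rightarrow> 'a poly qelem set set" where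
  "pi0_PT n e \<equiv> pi0 (\<lambda>a. [:a:]) n e"

definition mu_cls :: "nat \<Rightarrow> (nat \<Rightarrow> nat \<Rightarrow> 'a::comm_ring_1) \<Rightarrow> 'a qelem \<Rightarrow> 'a poly qelem set" where
  "mu_cls n e v = pi0_rel (\<lambda>a. [:a:]) n e `` {qconst v}"

definition mu :: "nat \<Rightarrow> (nat \<Rightarrow> nat \<Rightarrow> 'a::comm_ring_1) \<Rightarrow> 'a qelem set \<Rightarrow> 'a poly qelem set" where
  "mu n e X = the_elem (mu_cls n e ` X)"

end

theory Submission
  imports Defs
begin

definition rhom :: "('b::comm_ring_1 \<Rightarrow> 'c::comm_ring_1) \<Rightarrow> bool" where
  "rhom \<psi> \<longleftrightarrow> \<psi> 0 = 0 \<and> \<psi> 1 = 1 \<and> (\<forall>x y. \<psi> (x+y) = \<psi> x + \<psi> y) \<and> (\<forall>x y. \<psi> (x*y) = \<psi> x * \<psi> y)"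

lemma rhomD: assumes "rhom \<psi>" shows "\<psi> 0 = 0" "\<psi> 1 = 1" "\<psi> (x+y) = \<psi> x + \<psi> y" "\<psi> (x*y) = \<psi> x * \<psi> y"
  using assms by (auto simp: rhom_def)

lemma rhom_sum: "rhom \<psi> \<Longrightarrow> \<psi> (sum f A) = (\<Sum>i\<in>A. \<psi> (f i))"
  by (induction A rule: infinite_finite_induct) (auto simp: rhomD)

lemma rhom_pow: "rhom \<psi> \<Longrightarrow> \<psi> (x ^ k) = \<psi> x ^ k"
  by (induction k) (auto simp: rhomD)

lemma rhom_comp: "rhom \<psi> \<Longrightarrow> rhom \<chi> \<Longrightarrow> rhom (\<chi> \<circ> \<psi>)"
  by (auto simp: rhom_def)

lemma rhom_map_poly: assumes h: "rhom \<psi>" shows "rhom (map_poly \<psi>)"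
proof -
  have "map_poly \<psi> 1 = 1" using h by (intro poly_eqI) (auto simp: coeff_map_poly rhomD coeff_1)
  moreover have "map_poly \<psi> (p+q) = map_poly \<psi> p + map_poly \<psi> q" for p q
    using h by (intro poly_eqI) (auto simp: coeff_map_poly rhomD)
  moreover have "map_poly \<psi> (p*q) = map_poly \<psi> p * map_poly \<psi> q" for p q
    using h by (intro poly_eqI) (auto simp: coeff_map_poly rhomD coeff_mult rhom_sum)
  ultimately show ?thesis by (simp add: rhom_def)
qed

lemma rhom_poly_commute: assumes h: "rhom \<psi>" shows "\<psi> (poly p x) = poly (map_poly \<psi> p) (\<psi> x)"
  by (induction p) (auto simp: map_poly_pCons rhomD[OF h])

lemma rhom_eval: "rhom (\<lambda>p. poly p c)"
  by (simp add: rhom_def)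

lemma rhom_const: "rhom (\<lambda>a. [:a:])"
  by (simp add: rhom_def)

lemma rhom_id: "rhom (\<lambda>a. a)" by (simp add: rhom_def)

lemma map_poly_const: "rhom \<psi> \<Longrightarrow> map_poly \<psi> [:a:] = [:\<psi> a:]"
  by (simp add: map_poly_pCons rhomD)

definition qmap :: "('b \<Rightarrow> 'c) \<Rightarrow> 'b qelem \<Rightarrow> 'c qelem" where
  "qmap \<psi> v = (case v of (p, f, z) \<Rightarrow> ((\<lambda>i. \<psi> (p i)), (\<lambda>i. \<psi> (f i)), \<psi> z))"

lemma Qp_map:
  assumes h: "rhom \<psi>" and v: "v \<in> Qp \<phi> n e"
  shows "qmap \<psi> v \<in> Qp (\<lambda>a. \<psi> (\<phi> a)) n e"
proof -
  obtain p f z where vv: "v = (p, f, z)" by (cases v) auto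
  have Q: "(\<forall>i. n \<le> i \<longrightarrow> p i = 0 \<and> f i = 0)
      \<and> (\<forall>i<n. p i = (\<Sum>j<n. \<phi> (e i j) * p j))
      \<and> (\<forall>j<n. f j = (\<Sum>i<n. f i * \<phi> (e i j)))
      \<and> z ^ 2 + (\<Sum>i<n. f i * p i) = 1"
    using v unfolding vv Qp_def mem_Collect_eq prod.case by assumption
  have "\<psi> (z ^ 2 + (\<Sum>i<n. f i * p i)) = \<psi> 1" using Q by metis
  then have "\<psi> z ^ 2 + (\<Sum>i<n. \<psi> (f i) * \<psi> (p i)) = 1"
    by (simp add: rhomD[OF h] rhom_sum[OF h] rhom_pow[OF h])
  moreover have "\<psi> (p i) = (\<Sum>j<n. \<psi> (\<phi> (e i j)) * \<psi> (p j))" if "i < n" for i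
  proof -
    have "\<psi> (p i) = \<psi> (\<Sum>j<n. \<phi> (e i j) * p j)" using Q that by metis
    then show ?thesis by (simp add: rhomD[OF h] rhom_sum[OF h])
  qed
  moreover have "\<psi> (f j) = (\<Sum>i<n. \<psi> (f i) * \<psi> (\<phi> (e i j)))" if "j < n" for j
  proof -
    have "\<psi> (f j) = \<psi> (\<Sum>i<n. f i * \<phi> (e i j))" using Q that by metis
    then show ?thesis by (simp add: rhomD[OF h] rhom_sum[OF h])
  qed
  moreover have "\<forall>i. n \<le> i \<longrightarrow> \<psi> (p i) = 0 \<and> \<psi> (f i) = 0"
    using Q by (simp add: rhomD[OF h])
  ultimately show ?thesis by (simp add: vv qmap_def Qp_def)
qed

lemma qeval_map:
  assumes h: "rhom \<psi>"
  shows "qeval (\<psi> c) (qmap (map_poly \<psi>) \<Phi>) = qmap \<psi> (qeval c \<Phi>)"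
  by (cases \<Phi>) (auto simp: qeval_def qmap_def rhom_poly_commute[OF h])

lemma htp_map:
  assumes h: "rhom \<psi>" and vw: "(v, w) \<in> htp \<phi> n e"
  shows "(qmap \<psi> v, qmap \<psi> w) \<in> htp (\<lambda>a. \<psi> (\<phi> a)) n e"
proof -
  obtain \<Phi> where P: "\<Phi> \<in> Qp (\<lambda>a. [:\<phi> a:]) n e" "qeval 0 \<Phi> = v" "qeval 1 \<Phi> = w"
    using vw by (auto simp: htp_def)
  have "qmap (map_poly \<psi>) \<Phi> \<in> Qp (\<lambda>a. map_poly \<psi> [:\<phi> a:]) n e"
    by (rule Qp_map[OF rhom_map_poly[OF h] P(1)])
  then have "qmap (map_poly \<psi>) \<Phi> \<in> Qp (\<lambda>a. [:\<psi> (\<phi> a):]) n e"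
    by (simp add: map_poly_const[OF h])
  moreover have "qeval 0 (qmap (map_poly \<psi>) \<Phi>) = qmap \<psi> v"
    using qeval_map[OF h, of 0 \<Phi>] P by (simp add: rhomD[OF h])
  moreover have "qeval 1 (qmap (map_poly \<psi>) \<Phi>) = qmap \<psi> w"
    using qeval_map[OF h, of 1 \<Phi>] P by (simp add: rhomD[OF h])
  ultimately show ?thesis by (auto simp: htp_def)
qed

lemma rtr_map:
  assumes h: "rhom \<psi>" and vw: "(v, w) \<in> (htp \<phi> n e \<union> (htp \<phi> n e)\<inverse>)\<^sup>*"
  shows "(qmap \<psi> v, qmap \<psi> w) \<in> (htp (\<lambda>a. \<psi> (\<phi> a)) n e \<union> (htp (\<lambda>a. \<psi> (\<phi> a)) n e)\<inverse>)\<^sup>*"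
  using vw
proof (induction rule: rtrancl_induct)
  case base then show ?case by simp
next
  case (step y z)
  then have "(qmap \<psi> y, qmap \<psi> z) \<in> htp (\<lambda>a. \<psi> (\<phi> a)) n e \<union> (htp (\<lambda>a. \<psi> (\<phi> a)) n e)\<inverse>"
    using htp_map[OF h] by blast
  with step.IH show ?case by (rule rtrancl_into_rtrancl)
qed

lemma rel_map:
  assumes h: "rhom \<psi>" and vw: "(v, w) \<in> pi0_rel \<phi> n e"
  shows "(qmap \<psi> v, qmap \<psi> w) \<in> pi0_rel (\<lambda>a. \<psi> (\<phi> a)) n e"
proof -
  have a: "(v, w) \<in> (htp \<phi> n e \<union> (htp \<phi> n e)\<inverse>)\<^sup>*" "v \<in> Qp \<phi> n e" "w \<in> Qp \<phi> n e"
    using vw by (auto simp: pi0_rel_def)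
  show ?thesis unfolding pi0_rel_def
    using rtr_map[OF h a(1)] Qp_map[OF h a(2)] Qp_map[OF h a(3)] by blast
qed

lemma equiv_pi0: "equiv (Qp \<phi> n e) (pi0_rel \<phi> n e)"
proof (rule equivI)
  let ?H = "htp \<phi> n e"
  show "refl_on (Qp \<phi> n e) (pi0_rel \<phi> n e)"
    unfolding refl_on_def pi0_rel_def by auto
  have s: "(y, x) \<in> (?H \<union> ?H\<inverse>)\<^sup>*" if "(x, y) \<in> (?H \<union> ?H\<inverse>)\<^sup>*" for x y
  proof -
    have "(y, x) \<in> ((?H \<union> ?H\<inverse>)\<inverse>)\<^sup>*" using that by (simp add: rtrancl_converse)
    moreover have "(?H \<union> ?H\<inverse>)\<inverse> = ?H \<union> ?H\<inverse>" by auto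
    ultimately show ?thesis by simp
  qed
  show "sym (pi0_rel \<phi> n e)"
  proof (rule symI)
    fix x y assume "(x, y) \<in> pi0_rel \<phi> n e"
    then have "(x, y) \<in> (?H \<union> ?H\<inverse>)\<^sup>*" "x \<in> Qp \<phi> n e" "y \<in> Qp \<phi> n e"
      unfolding pi0_rel_def by auto
    then show "(y, x) \<in> pi0_rel \<phi> n e" unfolding pi0_rel_def using s by simp
  qed
  show "trans (pi0_rel \<phi> n e)"
  proof (rule transI)
    fix x y z assume a: "(x, y) \<in> pi0_rel \<phi> n e" and b: "(y, z) \<in> pi0_rel \<phi> n e"
    from a have "(x, y) \<in> (?H \<union> ?H\<inverse>)\<^sup>*" "x \<in> Qp \<phi> n e" unfolding pi0_rel_def by auto
    moreover from b have "(y, z) \<in> (?H \<union> ?H\<inverse>)\<^sup>*" "z \<in> Qp \<phi> n e" unfolding pi0_rel_def by auto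
    ultimately show "(x, z) \<in> pi0_rel \<phi> n e" unfolding pi0_rel_def
      using rtrancl_trans[of x y] by simp
  qed
  show "pi0_rel \<phi> n e \<subseteq> Qp \<phi> n e \<times> Qp \<phi> n e" unfolding pi0_rel_def by auto
qed

definition Ssub :: "'a::comm_ring_1 poly \<Rightarrow> 'a poly poly" where
  "Ssub p = poly (map_poly (\<lambda>c. [:[:c:]:]) p) [:0, [:0, 1:]:]"

lemma rhom_Ssub: "rhom Ssub"
proof -
  have "rhom ((\<lambda>a. [:a:]) \<circ> (\<lambda>a. [:a:]) :: 'a \<Rightarrow> 'a poly poly)" by (rule rhom_comp[OF rhom_const rhom_const])
  then have "rhom (\<lambda>c::'a. [:[:c:]:])" by (simp add: o_def)
  then have "rhom ((\<lambda>q. poly q [:0, [:0, 1:]:]) \<circ> map_poly (\<lambda>c::'a. [:[:c:]:]))"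
    by (rule rhom_comp[OF rhom_map_poly rhom_eval])
  then show ?thesis by (simp add: o_def Ssub_def[abs_def])
qed

lemma Ssub_const: "Ssub [:a:] = [:[:a:]:]"
  by (simp add: Ssub_def map_poly_pCons)

lemma poly_Ssub: "poly (Ssub p) x = poly (map_poly (\<lambda>c. [:c:]) p) (x * [:0, 1:])"
proof -
  have "poly (Ssub p) x = poly (map_poly (\<lambda>Q. poly Q x) (map_poly (\<lambda>c. [:[:c:]:]) p)) (poly [:0, [:0, 1:]:] x)"
    unfolding Ssub_def by (rule rhom_poly_commute[OF rhom_eval])
  also have "map_poly (\<lambda>Q. poly Q x) (map_poly (\<lambda>c. [:[:c:]:]) p) = map_poly (\<lambda>c. [:c:]) p"
    by (simp add: map_poly_map_poly o_def)
  finally show ?thesis by (simp add: mult.commute)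
qed

lemma poly_const_X: "poly (map_poly (\<lambda>c. [:c:]) p) [:0, 1:] = (p::'a::comm_ring_1 poly)"
proof -
  have s1: "smult 1 q = q" for q :: "'a poly" by (simp add: poly_eq_iff)
  show ?thesis by (induction p) (auto simp: map_poly_pCons s1)
qed

lemma Ssub_0: "poly (Ssub p) 0 = [:poly p 0:]"
proof -
  have "[:poly p 0:] = poly (map_poly (\<lambda>c. [:c:]) p) [:0:]"
    by (rule rhom_poly_commute[OF rhom_const])
  then show ?thesis by (simp add: poly_Ssub)
qed

lemma Ssub_1: "poly (Ssub p) 1 = p"
  by (simp add: poly_Ssub poly_const_X)

lemma qconst_eq: "qconst v = qmap (\<lambda>a. [:a:]) v"
  by (cases v) (simp add: qconst_def qmap_def)

lemma qeval_eq: "qeval c v = qmap (\<lambda>p. poly p c) v"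
  by (cases v) (simp add: qeval_def qmap_def)

lemma surj_htp:
  assumes P: "\<Phi> \<in> Qp (\<lambda>a. [:a:]) n e"
  shows "(qconst (qeval 0 \<Phi>), \<Phi>) \<in> htp (\<lambda>a. [:a:]) n e"
proof -
  have "qmap Ssub \<Phi> \<in> Qp (\<lambda>a. Ssub [:a:]) n e" by (rule Qp_map[OF rhom_Ssub P])
  then have "qmap Ssub \<Phi> \<in> Qp (\<lambda>a. [:[:a:]:]) n e" by (simp add: Ssub_const)
  moreover have "qeval 0 (qmap Ssub \<Phi>) = qconst (qeval 0 \<Phi>)"
    by (cases \<Phi>) (simp add: qeval_def qmap_def qconst_def Ssub_0)
  moreover have "qeval 1 (qmap Ssub \<Phi>) = \<Phi>"
    by (cases \<Phi>) (simp add: qeval_def qmap_def Ssub_1)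
  ultimately show ?thesis unfolding htp_def by blast
qed

theorem lemma4p3:
  fixes n :: nat and e :: "nat \<Rightarrow> nat \<Rightarrow> 'a::comm_ring_1"
  assumes "noetherian_ring TYPE('a)"
    and "\<exists>h::'a. 2 * h = 1"
    and "idempotent_mat n e"
    and "proj_rank_ge2 n e"
  shows "(\<forall>v \<in> Qp (\<lambda>a. a) n e. qconst v \<in> Qp (\<lambda>a. [:a:]) n e)
    \<and> mu_cls n e respects pi0_rel (\<lambda>a. a) n e
    \<and> bij_betw (mu n e) (pi0_P n e) (pi0_PT n e)"
proof -
  let ?Q = "Qp (\<lambda>a::'a. a) n e" and ?Q' = "Qp (\<lambda>a::'a. [:a:]) n e"
  let ?R = "pi0_rel (\<lambda>a::'a. a) n e" and ?R' = "pi0_rel (\<lambda>a::'a. [:a:]) n e"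
  have eqR: "equiv ?Q ?R" and eqR': "equiv ?Q' ?R'" by (rule equiv_pi0)+
  have c1: "qconst v \<in> ?Q'" if "v \<in> ?Q" for v
    using Qp_map[OF rhom_const that] by (simp add: qconst_eq)
  have relc: "(qconst v, qconst w) \<in> ?R'" if "(v, w) \<in> ?R" for v w
    using rel_map[OF rhom_const that] by (simp add: qconst_eq)
  have relev: "(qeval 0 v, qeval 0 w) \<in> ?R" if "(v, w) \<in> ?R'" for v w
    using rel_map[OF rhom_eval that] by (simp add: qeval_eq)
  have ev_c: "qeval 0 (qconst v) = v" for v :: "'a qelem"
    by (cases v) (simp add: qeval_def qconst_def)
  have resp: "mu_cls n e v = mu_cls n e w" if "(v, w) \<in> ?R" for v w
    unfolding mu_cls_def using relc[OF that] equiv_class_eq[OF eqR'] by blast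
  have muR: "mu n e (?R `` {v}) = ?R' `` {qconst v}" if v: "v \<in> ?Q" for v
  proof -
    have "mu_cls n e ` (?R `` {v}) = {mu_cls n e v}"
    proof
      show "mu_cls n e ` (?R `` {v}) \<subseteq> {mu_cls n e v}"
      proof
        fix Z assume "Z \<in> mu_cls n e ` (?R `` {v})"
        then obtain w where "(v, w) \<in> ?R" "Z = mu_cls n e w" by blast
        then show "Z \<in> {mu_cls n e v}" using resp by simp
      qed
      have "v \<in> ?R `` {v}" using v eqR unfolding equiv_def refl_on_def by blast
      then show "{mu_cls n e v} \<subseteq> mu_cls n e ` (?R `` {v})" by blast
    qed
    then show ?thesis by (simp add: mu_def mu_cls_def)
  qed
  have inj: "inj_on (mu n e) (pi0_P n e)"
  proof (rule inj_onI)
    fix X Y assume X: "X \<in> pi0_P n e" and Y: "Y \<in> pi0_P n e" and eq: "mu n e X = mu n e Y"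
    obtain v where v: "v \<in> ?Q" "X = ?R `` {v}" using X by (auto simp: pi0_def elim: quotientE)
    obtain w where w: "w \<in> ?Q" "Y = ?R `` {w}" using Y by (auto simp: pi0_def elim: quotientE)
    have "?R' `` {qconst v} = ?R' `` {qconst w}" using eq muR v w by simp
    then have "(qconst v, qconst w) \<in> ?R'"
      using eq_equiv_class_iff[OF eqR' c1[OF v(1)] c1[OF w(1)]] by simp
    then have "(v, w) \<in> ?R" using relev ev_c by metis
    then show "X = Y" using v w equiv_class_eq[OF eqR] by simp
  qed
  have img: "mu n e ` pi0_P n e = pi0_PT n e"
  proof
    show "mu n e ` pi0_P n e \<subseteq> pi0_PT n e"
    proof
      fix Z assume "Z \<in> mu n e ` pi0_P n e"
      then obtain v where v: "v \<in> ?Q" "Z = mu n e (?R `` {v})"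
        by (auto simp: pi0_def elim!: quotientE)
      then have "Z = ?R' `` {qconst v}" using muR by simp
      then show "Z \<in> pi0_PT n e" unfolding pi0_def using c1[OF v(1)] by (simp add: quotientI)
    qed
    show "pi0_PT n e \<subseteq> mu n e ` pi0_P n e"
    proof
      fix Z assume "Z \<in> pi0_PT n e"
      then obtain \<Phi> where P: "\<Phi> \<in> ?Q'" "Z = ?R' `` {\<Phi>}" by (auto simp: pi0_def elim!: quotientE)
      define v where "v = qeval 0 \<Phi>"
      have vQ: "v \<in> ?Q" unfolding v_def qeval_eq using Qp_map[OF rhom_eval P(1)] by simp
      have "(qconst v, \<Phi>) \<in> htp (\<lambda>a. [:a:]) n e" unfolding v_def by (rule surj_htp[OF P(1)])
      then have "(qconst v, \<Phi>) \<in> ?R'" using c1[OF vQ] P(1) unfolding pi0_rel_def by blast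
      then have "Z = ?R' `` {qconst v}" using P(2) equiv_class_eq[OF eqR'] by simp
      also have "\<dots> = mu n e (?R `` {v})" using muR[OF vQ] by simp
      finally show "Z \<in> mu n e ` pi0_P n e" using vQ unfolding pi0_def by (auto intro: quotientI)
    qed
  qed
  show ?thesis
    using c1 resp inj img by (auto simp: congruent_def bij_betw_def)
qed

end
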